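(* Let $D\ge 2$, let $W_1,\dots,W_D$ be mutually independent discrete random variables with finite entropy, and let $S$ be a discrete random variable (jointly distributed with $W_1,\dots,W_D$) with $H(S)<\infty$. Then $$\sum_{\substack{d_1,d_2\in[1:D]\\ d_1\neq d_2}} I\big(W_{d_1},W_{d_2};S\big)\ \le\ (2D-1)\,H(S),$$ where the sum runs over ordered pairs $(d_1,d_2)$.
   Context: $I(\cdot;\cdot)$ denotes mutual information and $H(\cdot)$ Shannon entropy; $[1:D]=\{1,\dots,D\}$. *)

theory Defs
  imports "HOL-Probability.Probability"
begin

end

theory Submission
  imports Defs
begin



lemma integrable_cs_iff:
  fixes f :: "'x \<Rightarrow> real"
  shows "integrable (count_space A) f \<longleftrightarrow> f summable_on A"
  using abs_summable_equivalent[of f A] summable_on_iff_abs_summable_on_real[of f A]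
  unfolding Infinite_Set_Sum.abs_summable_on_def by simp

lemma integral_cs_infsum:
  fixes f :: "'x \<Rightarrow> real"
  assumes "f summable_on A"
  shows "integral\<^sup>L (count_space A) f = infsum f A"
  using infsetsum_infsum[of f A] assms integrable_cs_iff[of A f]
  unfolding Infinite_Set_Sum.abs_summable_on_def infsetsum_def by simp

lemma cs_pair: "count_space (UNIV::'x::countable set) \<Otimes>\<^sub>M count_space (UNIV::'y::countable set) = count_space UNIV"
  by (simp add: pair_measure_countable)



context information_space
begin

definition pX :: "('a \<Rightarrow> 'x) \<Rightarrow> 'x \<Rightarrow> real" where
  "pX X x = measure M (X -` {x} \<inter> space M)"

definition qX :: "('a \<Rightarrow> 'x) \<Rightarrow> 'x \<Rightarrow> real" where
  "qX X x = - (pX X x * log b (pX X x))"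

definition fe :: "('a \<Rightarrow> 'x::countable) \<Rightarrow> bool" where
  "fe X \<longleftrightarrow> X \<in> measurable M (count_space UNIV) \<and> qX X summable_on UNIV"

lemma pX_nonneg: "0 \<le> pX X x" by (simp add: pX_def)
lemma pX_le1: "pX X x \<le> 1" by (simp add: pX_def)

lemma qX_nonneg: "0 \<le> qX X x"
proof -
  have "log b (pX X x) \<le> 0"
  proof (cases "pX X x = 0")
    case True then show ?thesis by (simp add: log_def)
  next
    case False
    then have "0 < pX X x" using pX_nonneg[of X x] by linarith
    then show ?thesis using pX_le1[of X x] b_gt_1 by (simp add: log_le_zero_cancel_iff)
  qed
  then show ?thesis unfolding qX_def using pX_nonneg[of X x]
    by (simp add: mult_nonneg_nonpos)
qed

lemma distributed_pX:
  fixes X :: "'a \<Rightarrow> 'x::countable"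
  assumes X: "X \<in> measurable M (count_space UNIV)"
  shows "distributed M (count_space UNIV) X (\<lambda>x. ennreal (pX X x))"
  unfolding distributed_def
proof (intro conjI)
  show "distr M (count_space UNIV) X = density (count_space UNIV) (\<lambda>x. ennreal (pX X x))"
  proof (rule measure_eqI_countable[where A=UNIV])
    fix a :: 'x
    have "emeasure (distr M (count_space UNIV) X) {a} = emeasure M (X -` {a} \<inter> space M)"
      using X by (simp add: emeasure_distr)
    also have "\<dots> = ennreal (pX X a)"
      unfolding pX_def by (simp add: emeasure_eq_measure)
    also have "\<dots> = emeasure (density (count_space UNIV) (\<lambda>x. ennreal (pX X x))) {a}"
      by (simp add: emeasure_density nn_integral_indicator_singleton)
    finally show "emeasure (distr M (count_space UNIV) X) {a} = emeasure (density (count_space UNIV) (\<lambda>x. ennreal (pX X x))) {a}" .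
  qed auto
qed (use X in auto)

lemma entropy_pX:
  fixes X :: "'a \<Rightarrow> 'x::countable"
  assumes X: "X \<in> measurable M (count_space UNIV)"
  shows "entropy b (count_space UNIV) X = - integral\<^sup>L (count_space UNIV) (\<lambda>x. pX X x * log b (pX X x))"
  by (rule entropy_distr[OF distributed_pX[OF X]]) (simp add: pX_nonneg)

lemma entropy_infsum:
  fixes X :: "'a \<Rightarrow> 'x::countable"
  assumes "fe X"
  shows "entropy b (count_space UNIV) X = infsum (qX X) UNIV"
proof -
  have s: "(\<lambda>x. pX X x * log b (pX X x)) summable_on UNIV"
    using assms summable_on_uminus[of "qX X" UNIV] unfolding fe_def qX_def by simp
  show ?thesis using assms
    unfolding entropy_pX[OF conjunct1[OF assms[unfolded fe_def]]] integral_cs_infsum[OF s] qX_def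
    by (simp add: infsum_uminus)
qed

lemma entropy_nonneg:
  fixes X :: "'a \<Rightarrow> 'x::countable"
  assumes X: "X \<in> measurable M (count_space UNIV)"
  shows "0 \<le> entropy b (count_space UNIV) X"
proof -
  have "0 \<le> integral\<^sup>L (count_space UNIV) (\<lambda>x. - (pX X x * log b (pX X x)))"
    by (rule Bochner_Integration.integral_nonneg) (rule qX_nonneg[of X, unfolded qX_def])
  moreover have "integral\<^sup>L (count_space UNIV) (\<lambda>x. - (pX X x * log b (pX X x))) = - integral\<^sup>L (count_space UNIV) (\<lambda>x. pX X x * log b (pX X x))"
    by (rule Bochner_Integration.integral_minus)
  ultimately show ?thesis using entropy_pX[OF X] by linarith
qed

lemma fe_finite_entropy:
  fixes X :: "'a \<Rightarrow> 'x::countable"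
  assumes "fe X"
  shows "finite_entropy (count_space UNIV) X (pX X)"
proof -
  have s: "(\<lambda>x. pX X x * log b (pX X x)) summable_on UNIV"
    using assms summable_on_uminus[of "qX X" UNIV] unfolding fe_def qX_def by simp
  show ?thesis unfolding finite_entropy_def
    using distributed_pX[of X] assms s integrable_cs_iff pX_nonneg unfolding fe_def by auto
qed

lemma finite_entropy_fe:
  fixes X :: "'a \<Rightarrow> 'x::countable"
  assumes "finite_entropy (count_space UNIV) X f"
  shows "fe X"
proof -
  have D: "distributed M (count_space UNIV) X f" and nn: "\<And>x. 0 \<le> f x"
    and I: "integrable (count_space UNIV) (\<lambda>x. f x * log b (f x))"
    using assms unfolding finite_entropy_def by auto
  have X: "X \<in> measurable M (count_space UNIV)" using D by (simp add: distributed_def)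
  have eq: "f x = pX X x" for x
  proof -
    have "ennreal (f x) = emeasure (density (count_space UNIV) (\<lambda>x. ennreal (f x))) {x}"
      by (simp add: emeasure_density nn_integral_indicator_singleton)
    also have "\<dots> = emeasure (distr M (count_space UNIV) X) {x}"
      using D by (simp add: distributed_def)
    also have "\<dots> = ennreal (pX X x)"
      using X unfolding pX_def by (simp add: emeasure_distr emeasure_eq_measure)
    finally have "ennreal (f x) = ennreal (pX X x)" .
    then show ?thesis by (simp only: ennreal_inj[OF nn[of x] pX_nonneg[of X x]])
  qed
  have feq: "(\<lambda>x. f x * log b (f x)) = (\<lambda>x. pX X x * log b (pX X x))"
    using eq by simp
  have "(\<lambda>x. pX X x * log b (pX X x)) summable_on UNIV"
    using I unfolding feq integrable_cs_iff .
  then have "qX X summable_on UNIV" unfolding qX_def by (rule summable_on_uminus[THEN iffD2])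
  then show ?thesis using X unfolding fe_def by simp
qed

end


context information_space
begin

lemma pX_comp_inj:
  assumes "inj g"
  shows "pX (\<lambda>\<omega>. g (X \<omega>)) (g a) = pX X a"
proof -
  have "(\<lambda>\<omega>. g (X \<omega>)) -` {g a} = X -` {a}" using assms by (auto simp: inj_def)
  then show ?thesis by (simp add: pX_def)
qed

lemma pX_notin_range:
  assumes "y \<notin> range g"
  shows "pX (\<lambda>\<omega>. g (X \<omega>)) y = 0"
proof -
  have "(\<lambda>\<omega>. g (X \<omega>)) -` {y} = {}" using assms by auto
  then show ?thesis by (simp add: pX_def)
qed

lemma meas_comp_cs:
  fixes X :: "'a \<Rightarrow> 'x::countable" and g :: "'x \<Rightarrow> 'y::countable"
  assumes "X \<in> measurable M (count_space UNIV)"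
  shows "(\<lambda>\<omega>. g (X \<omega>)) \<in> measurable M (count_space UNIV)"
  using measurable_compose[OF assms, of g "count_space UNIV"] by simp

lemma entropy_relabel:
  fixes X :: "'a \<Rightarrow> 'x::countable" and g :: "'x \<Rightarrow> 'y::countable"
  assumes X: "X \<in> measurable M (count_space UNIV)" and g: "inj g"
  shows "entropy b (count_space UNIV) (\<lambda>\<omega>. g (X \<omega>)) = entropy b (count_space UNIV) X"
proof -
  let ?F = "\<lambda>y. pX (\<lambda>\<omega>. g (X \<omega>)) y * log b (pX (\<lambda>\<omega>. g (X \<omega>)) y)"
  have "infsetsum ?F UNIV = infsetsum ?F (range g)"
    by (rule infsetsum_cong_neutral) (auto simp: pX_notin_range)
  also have "\<dots> = infsetsum (\<lambda>x. ?F (g x)) UNIV"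
    using g by (rule infsetsum_reindex)
  also have "\<dots> = infsetsum (\<lambda>x. pX X x * log b (pX X x)) UNIV"
    using g by (simp add: pX_comp_inj)
  finally show ?thesis
    unfolding entropy_pX[OF X] entropy_pX[OF meas_comp_cs[OF X]] infsetsum_def by simp
qed

lemma fe_relabel:
  fixes X :: "'a \<Rightarrow> 'x::countable" and g :: "'x \<Rightarrow> 'y::countable"
  assumes X: "fe X" and g: "inj g"
  shows "fe (\<lambda>\<omega>. g (X \<omega>))"
proof -
  have m: "X \<in> measurable M (count_space UNIV)" using X by (simp add: fe_def)
  let ?F = "qX (\<lambda>\<omega>. g (X \<omega>))"
  have "qX X summable_on UNIV" using X by (simp add: fe_def)
  moreover have "?F \<circ> g = qX X"
    using g by (simp add: o_def qX_def pX_comp_inj fun_eq_iff)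
  ultimately have "(?F \<circ> g) summable_on UNIV" by simp
  then have "?F summable_on (range g)"
    using g by (simp add: summable_on_reindex)
  then have "?F summable_on UNIV"
    by (rule summable_on_cong_neutral[THEN iffD1, rotated -1]) (auto simp: qX_def pX_notin_range)
  then show ?thesis using meas_comp_cs[OF m] by (simp add: fe_def)
qed

lemma pX_const: "pX (\<lambda>\<omega>. c) x = (if x = c then 1 else 0)"
  by (simp add: pX_def prob_space)

lemma entropy_const:
  fixes c :: "'x::countable"
  shows "entropy b (count_space UNIV) (\<lambda>\<omega>. c) = 0"
proof -
  have "(\<lambda>x. pX (\<lambda>\<omega>. c) x * log b (pX (\<lambda>\<omega>. c) x)) = (\<lambda>x. 0)"
    by (auto simp: pX_const fun_eq_iff)
  then show ?thesis by (subst entropy_pX) auto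
qed

lemma fe_const:
  fixes c :: "'x::countable"
  shows "fe (\<lambda>\<omega>. c)"
  unfolding fe_def qX_def pX_const
  by (auto intro: summable_on_0)


lemma log_pX_nonpos: "log b (pX X x) \<le> 0"
proof (cases "pX X x = 0")
  case True then show ?thesis by (simp add: log_def)
next
  case False
  then have "0 < pX X x" using pX_nonneg[of X x] by linarith
  then show ?thesis using pX_le1[of X x] b_gt_1 by (simp add: log_le_zero_cancel_iff)
qed

lemma sum_prob_disj_le:
  assumes "finite A" "\<And>a. a \<in> A \<Longrightarrow> E a \<in> sets M" "disjoint_family_on E A"
    "\<And>a. a \<in> A \<Longrightarrow> E a \<subseteq> C" "C \<in> sets M"
  shows "(\<Sum>a\<in>A. prob (E a)) \<le> prob C"
proof -
  have "(\<Sum>a\<in>A. prob (E a)) = prob (\<Union>a\<in>A. E a)"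
    using assms by (intro finite_measure_finite_Union[symmetric]) auto
  also have "\<dots> \<le> prob C"
    using assms by (intro finite_measure_mono) auto
  finally show ?thesis .
qed

lemma preimage_sets:
  fixes X :: "'a \<Rightarrow> 'x::countable"
  assumes "X \<in> measurable M (count_space UNIV)"
  shows "X -` {x} \<inter> space M \<in> sets M"
  using measurable_sets[OF assms, of "{x}"] by simp

lemma sum_pX_le1:
  fixes X :: "'a \<Rightarrow> 'x::countable"
  assumes X: "X \<in> measurable M (count_space UNIV)" and A: "finite A"
  shows "(\<Sum>x\<in>A. pX X x) \<le> 1"
proof -
  have "(\<Sum>x\<in>A. pX X x) \<le> prob (space M)"
    unfolding pX_def
    by (rule sum_prob_disj_le[OF A]) (auto simp: disjoint_family_on_def preimage_sets[OF X])
  then show ?thesis by (simp add: prob_space)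
qed

lemma pX_pair:
  "pX (\<lambda>\<omega>. (X \<omega>, Y \<omega>)) (x, y) = prob ((X -` {x} \<inter> space M) \<inter> (Y -` {y} \<inter> space M))"
proof -
  have "(\<lambda>\<omega>. (X \<omega>, Y \<omega>)) -` {(x, y)} \<inter> space M = (X -` {x} \<inter> space M) \<inter> (Y -` {y} \<inter> space M)"
    by auto
  then show ?thesis by (simp add: pX_def)
qed

lemma sum_joint_le_fst:
  fixes X :: "'a \<Rightarrow> 'x::countable" and Y :: "'a \<Rightarrow> 'y::countable"
  assumes X: "X \<in> measurable M (count_space UNIV)" and Y: "Y \<in> measurable M (count_space UNIV)"
    and B: "finite B"
  shows "(\<Sum>y\<in>B. pX (\<lambda>\<omega>. (X \<omega>, Y \<omega>)) (x, y)) \<le> pX X x"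
  unfolding pX_pair unfolding pX_def
  by (rule sum_prob_disj_le[OF B]) (auto simp: disjoint_family_on_def preimage_sets[OF X] preimage_sets[OF Y])

lemma sum_joint_le_snd:
  fixes X :: "'a \<Rightarrow> 'x::countable" and Y :: "'a \<Rightarrow> 'y::countable"
  assumes X: "X \<in> measurable M (count_space UNIV)" and Y: "Y \<in> measurable M (count_space UNIV)"
    and A: "finite A"
  shows "(\<Sum>x\<in>A. pX (\<lambda>\<omega>. (X \<omega>, Y \<omega>)) (x, y)) \<le> pX Y y"
  unfolding pX_pair unfolding pX_def
  by (rule sum_prob_disj_le[OF A]) (auto simp: disjoint_family_on_def preimage_sets[OF X] preimage_sets[OF Y])

lemma joint_le_fst:
  fixes X :: "'a \<Rightarrow> 'x::countable" and Y :: "'a \<Rightarrow> 'y::countable"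
  assumes X: "X \<in> measurable M (count_space UNIV)" and Y: "Y \<in> measurable M (count_space UNIV)"
  shows "pX (\<lambda>\<omega>. (X \<omega>, Y \<omega>)) (x, y) \<le> pX X x"
  using sum_joint_le_fst[OF X Y, of "{y}" x] by simp

lemma joint_le_snd:
  fixes X :: "'a \<Rightarrow> 'x::countable" and Y :: "'a \<Rightarrow> 'y::countable"
  assumes X: "X \<in> measurable M (count_space UNIV)" and Y: "Y \<in> measurable M (count_space UNIV)"
  shows "pX (\<lambda>\<omega>. (X \<omega>, Y \<omega>)) (x, y) \<le> pX Y y"
  using sum_joint_le_snd[OF X Y, of "{x}" y] by simp

lemma gibbs_point:
  fixes p px py :: real
  assumes "0 \<le> p" "p \<le> px" "p \<le> py"
  shows "- (p * log b p) \<le> px * py / ln b + p * (- log b px) + p * (- log b py)"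
proof (cases "p = 0")
  case True
  have "0 \<le> px * py / ln b" using assms b_gt_1 by simp
  then show ?thesis using True by simp
next
  case False
  then have p: "0 < p" using assms by simp
  then have pxp: "0 < px" "0 < py" using assms by auto
  have lnb: "0 < ln b" using b_gt_1 by simp
  have "log b (px * py / p) = log b px + log b py - log b p"
    using p pxp by (simp add: log_mult log_divide)
  moreover have "log b (px * py / p) \<le> (px * py / p - 1) / ln b"
  proof -
    have "ln (px * py / p) \<le> px * py / p - 1"
      using p pxp by (intro ln_le_minus_one) simp
    then show ?thesis unfolding log_def using lnb by (simp add: divide_right_mono)
  qed
  ultimately have "log b px + log b py - log b p \<le> (px * py / p - 1) / ln b" by simp
  then have "p * (log b px + log b py - log b p) \<le> p * ((px * py / p - 1) / ln b)"
    using p by (intro mult_left_mono) auto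
  also have "\<dots> = (px * py - p) / ln b" using p lnb by (simp add: field_simps)
  also have "\<dots> \<le> px * py / ln b" using p lnb by (simp add: divide_right_mono)
  finally show ?thesis by (simp add: algebra_simps)
qed


lemma meas_pair_cs:
  fixes X :: "'a \<Rightarrow> 'x::countable" and Y :: "'a \<Rightarrow> 'y::countable"
  assumes X: "X \<in> measurable M (count_space UNIV)" and Y: "Y \<in> measurable M (count_space UNIV)"
  shows "(\<lambda>\<omega>. (X \<omega>, Y \<omega>)) \<in> measurable M (count_space UNIV)"
  using measurable_Pair[OF X Y] by (simp add: cs_pair)

lemma fe_pair:
  fixes X :: "'a \<Rightarrow> 'x::countable" and Y :: "'a \<Rightarrow> 'y::countable"
  assumes fX: "fe X" and fY: "fe Y"
  shows "fe (\<lambda>\<omega>. (X \<omega>, Y \<omega>))"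
proof -
  have X: "X \<in> measurable M (count_space UNIV)" and sX: "qX X summable_on UNIV"
    using fX by (auto simp: fe_def)
  have Y: "Y \<in> measurable M (count_space UNIV)" and sY: "qX Y summable_on UNIV"
    using fY by (auto simp: fe_def)
  let ?Z = "\<lambda>\<omega>. (X \<omega>, Y \<omega>)"
  let ?p = "pX ?Z"
  let ?K = "1 / ln b + infsum (qX X) UNIV + infsum (qX Y) UNIV"
  have lnb: "0 < ln b" using b_gt_1 by simp
  have bound: "sum (qX ?Z) F \<le> ?K" if F: "finite F" for F
  proof -
    define A where "A = fst ` F"
    define B where "B = snd ` F"
    have AB: "finite A" "finite B" "F \<subseteq> A \<times> B" using F
      by (auto simp: A_def B_def intro: rev_image_eqI)
    have "sum (qX ?Z) F \<le> sum (qX ?Z) (A \<times> B)"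
      using AB by (intro sum_mono2) (auto simp: qX_nonneg)
    also have "\<dots> \<le> (\<Sum>(x,y)\<in>A \<times> B. pX X x * pX Y y / ln b + ?p (x,y) * (- log b (pX X x))
                          + ?p (x,y) * (- log b (pX Y y)))"
    proof (rule sum_mono)
      fix z assume "z \<in> A \<times> B"
      obtain x y where z: "z = (x, y)" by fastforce
      show "qX ?Z z \<le> (case z of (x,y) \<Rightarrow> pX X x * pX Y y / ln b + ?p (x,y) * (- log b (pX X x))
                          + ?p (x,y) * (- log b (pX Y y)))"
        unfolding z qX_def prod.case
        by (rule gibbs_point[OF pX_nonneg joint_le_fst[OF X Y] joint_le_snd[OF X Y]])
    qed
    also have "\<dots> = (\<Sum>x\<in>A. \<Sum>y\<in>B. pX X x * pX Y y / ln b + ?p (x,y) * (- log b (pX X x))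
                          + ?p (x,y) * (- log b (pX Y y)))"
      by (rule sum.cartesian_product[symmetric])
    also have "\<dots> = (\<Sum>x\<in>A. \<Sum>y\<in>B. pX X x * pX Y y / ln b)
         + (\<Sum>x\<in>A. \<Sum>y\<in>B. ?p (x,y) * (- log b (pX X x)))
         + (\<Sum>x\<in>A. \<Sum>y\<in>B. ?p (x,y) * (- log b (pX Y y)))"
      by (simp only: sum.distrib)
    also have "(\<Sum>x\<in>A. \<Sum>y\<in>B. pX X x * pX Y y / ln b) = (\<Sum>x\<in>A. pX X x) * (\<Sum>y\<in>B. pX Y y) / ln b"
      by (simp add: sum_product sum_divide_distrib)
    also have "\<dots> \<le> 1 / ln b"
    proof -
      have "(\<Sum>x\<in>A. pX X x) * (\<Sum>y\<in>B. pX Y y) \<le> 1 * 1"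
        using sum_pX_le1[OF X AB(1)] sum_pX_le1[OF Y AB(2)]
        by (intro mult_mono) (auto intro: sum_nonneg pX_nonneg)
      then show ?thesis using lnb by (simp add: divide_right_mono)
    qed
    also have "(\<Sum>x\<in>A. \<Sum>y\<in>B. ?p (x,y) * (- log b (pX X x))) \<le> sum (qX X) A"
    proof (rule sum_mono)
      fix x assume "x \<in> A"
      have "(\<Sum>y\<in>B. ?p (x,y) * (- log b (pX X x))) = (\<Sum>y\<in>B. ?p (x,y)) * (- log b (pX X x))"
        by (rule sum_distrib_right[symmetric])
      also have "\<dots> \<le> pX X x * (- log b (pX X x))"
        using sum_joint_le_fst[OF X Y AB(2), of x] log_pX_nonpos[of X x]
        by (intro mult_right_mono) auto
      finally show "(\<Sum>y\<in>B. ?p (x,y) * (- log b (pX X x))) \<le> qX X x" by (simp add: qX_def)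
    qed
    also have "(\<Sum>x\<in>A. \<Sum>y\<in>B. ?p (x,y) * (- log b (pX Y y))) \<le> sum (qX Y) B"
    proof -
      have "(\<Sum>x\<in>A. \<Sum>y\<in>B. ?p (x,y) * (- log b (pX Y y))) = (\<Sum>y\<in>B. \<Sum>x\<in>A. ?p (x,y) * (- log b (pX Y y)))"
        by (rule sum.swap)
      also have "\<dots> \<le> sum (qX Y) B"
      proof (rule sum_mono)
        fix y assume "y \<in> B"
        have "(\<Sum>x\<in>A. ?p (x,y) * (- log b (pX Y y))) = (\<Sum>x\<in>A. ?p (x,y)) * (- log b (pX Y y))"
          by (rule sum_distrib_right[symmetric])
        also have "\<dots> \<le> pX Y y * (- log b (pX Y y))"
          using sum_joint_le_snd[OF X Y AB(1), of y] log_pX_nonpos[of Y y]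
          by (intro mult_right_mono) auto
        finally show "(\<Sum>x\<in>A. ?p (x,y) * (- log b (pX Y y))) \<le> qX Y y" by (simp add: qX_def)
      qed
      finally show ?thesis .
    qed
    also have "sum (qX X) A \<le> infsum (qX X) UNIV"
      using sX AB by (intro finite_sum_le_infsum) (auto simp: qX_nonneg)
    also have "sum (qX Y) B \<le> infsum (qX Y) UNIV"
      using sY AB by (intro finite_sum_le_infsum) (auto simp: qX_nonneg)
    finally show ?thesis by simp
  qed
  have "qX ?Z summable_on UNIV"
    by (rule nonneg_bdd_above_summable_on) (auto simp: qX_nonneg bdd_above_def intro!: exI[of _ ?K] bound)
  then show ?thesis using meas_pair_cs[OF X Y] by (simp add: fe_def)
qed


lemma sf_cs: "sigma_finite_measure (count_space (UNIV::'x::countable set))"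
  by (rule sigma_finite_measure_count_space_countable) simp

lemma mi_eq:
  fixes X :: "'a \<Rightarrow> 'x::countable" and Y :: "'a \<Rightarrow> 'y::countable"
  assumes fX: "fe X" and fY: "fe Y"
  shows "mutual_information b (count_space UNIV) (count_space UNIV) X Y =
    entropy b (count_space UNIV) X + entropy b (count_space UNIV) Y
    - entropy b (count_space UNIV) (\<lambda>\<omega>. (X \<omega>, Y \<omega>))"
proof -
  have fXY: "fe (\<lambda>\<omega>. (X \<omega>, Y \<omega>))" by (rule fe_pair[OF fX fY])
  note FX = fe_finite_entropy[OF fX] and FY = fe_finite_entropy[OF fY]
    and FXY = fe_finite_entropy[OF fXY]
  have DX: "distributed M (count_space UNIV) X (\<lambda>x. ennreal (pX X x))"
    using FX by (rule finite_entropy_distributed)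
  have DY: "distributed M (count_space UNIV) Y (\<lambda>x. ennreal (pX Y x))"
    using FY by (rule finite_entropy_distributed)
  have DXY: "distributed M (count_space UNIV \<Otimes>\<^sub>M count_space UNIV) (\<lambda>\<omega>. (X \<omega>, Y \<omega>))
      (\<lambda>x. ennreal (pX (\<lambda>\<omega>. (X \<omega>, Y \<omega>)) x))"
    using FXY unfolding cs_pair by (rule finite_entropy_distributed)
  have Ix: "integrable (count_space UNIV \<Otimes>\<^sub>M count_space UNIV)
      (\<lambda>z. pX (\<lambda>\<omega>. (X \<omega>, Y \<omega>)) z * log b (pX X (fst z)))"
    by (rule finite_entropy_integrable_transform[OF FX DXY]) (auto simp: pX_nonneg)
  have Iy: "integrable (count_space UNIV \<Otimes>\<^sub>M count_space UNIV)
      (\<lambda>z. pX (\<lambda>\<omega>. (X \<omega>, Y \<omega>)) z * log b (pX Y (snd z)))"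
    by (rule finite_entropy_integrable_transform[OF FY DXY]) (auto simp: pX_nonneg)
  have Ixy: "integrable (count_space UNIV \<Otimes>\<^sub>M count_space UNIV)
      (\<lambda>z. pX (\<lambda>\<omega>. (X \<omega>, Y \<omega>)) z * log b (pX (\<lambda>\<omega>. (X \<omega>, Y \<omega>)) z))"
    unfolding cs_pair using FXY by (rule finite_entropy_integrable)
  have "mutual_information b (count_space UNIV) (count_space UNIV) X Y =
    entropy b (count_space UNIV) X + entropy b (count_space UNIV) Y
    - entropy b (count_space UNIV \<Otimes>\<^sub>M count_space UNIV) (\<lambda>\<omega>. (X \<omega>, Y \<omega>))"
    by (rule mutual_information_eq_entropy_conditional_entropy_distr[OF sf_cs sf_cs DX _ DY _ DXY _ Ix Iy Ixy])
       (auto simp: pX_nonneg)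
  then show ?thesis unfolding cs_pair .
qed

lemma submod:
  fixes X :: "'a \<Rightarrow> 'x::countable" and Y :: "'a \<Rightarrow> 'y::countable" and Z :: "'a \<Rightarrow> 'z::countable"
  assumes fX: "fe X" and fY: "fe Y" and fZ: "fe Z"
  shows "entropy b (count_space UNIV) (\<lambda>\<omega>. (X \<omega>, Y \<omega>, Z \<omega>)) + entropy b (count_space UNIV) Z
    \<le> entropy b (count_space UNIV) (\<lambda>\<omega>. (X \<omega>, Z \<omega>)) + entropy b (count_space UNIV) (\<lambda>\<omega>. (Y \<omega>, Z \<omega>))"
proof -
  have fYZ: "fe (\<lambda>\<omega>. (Y \<omega>, Z \<omega>))" by (rule fe_pair[OF fY fZ])
  have fXZ: "fe (\<lambda>\<omega>. (X \<omega>, Z \<omega>))" by (rule fe_pair[OF fX fZ])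
  have fXYZ: "fe (\<lambda>\<omega>. (X \<omega>, Y \<omega>, Z \<omega>))" by (rule fe_pair[OF fX fYZ])
  have "0 \<le> conditional_mutual_information b (count_space UNIV) (count_space UNIV) (count_space UNIV) X Y Z"
    by (rule conditional_mutual_information_generic_nonneg'[OF sf_cs sf_cs sf_cs
      fe_finite_entropy[OF fX] fe_finite_entropy[OF fZ]
      fe_finite_entropy[OF fYZ, folded cs_pair] fe_finite_entropy[OF fXZ, folded cs_pair]
      fe_finite_entropy[OF fXYZ, folded cs_pair]])
  also have "\<dots> = mutual_information b (count_space UNIV) (count_space UNIV) X (\<lambda>\<omega>. (Y \<omega>, Z \<omega>))
      - mutual_information b (count_space UNIV) (count_space UNIV) X Z"
    unfolding conditional_mutual_information_def cs_pair ..
  finally show ?thesis unfolding mi_eq[OF fX fYZ] mi_eq[OF fX fZ] by simp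
qed

lemma indep_entropy:
  fixes X :: "'a \<Rightarrow> 'x::countable" and Y :: "'a \<Rightarrow> 'x::countable"
  assumes fX: "fe X" and fY: "fe Y" and ind: "indep_var (count_space UNIV) X (count_space UNIV) Y"
  shows "entropy b (count_space UNIV) (\<lambda>\<omega>. (X \<omega>, Y \<omega>)) =
    entropy b (count_space UNIV) X + entropy b (count_space UNIV) Y"
proof -
  have "mutual_information b (count_space UNIV) (count_space UNIV) X Y = 0"
    using ind mutual_information_indep_vars by blast
  then show ?thesis using mi_eq[OF fX fY] by simp
qed


abbreviation HH :: "('a \<Rightarrow> 'x::countable) \<Rightarrow> real" where
  "HH X \<equiv> entropy b (count_space UNIV) X"

lemma meas_map_PiM:
  fixes L :: "'i list"
  assumes "set L \<subseteq> I"
  shows "(\<lambda>f. map f L) \<in> measurable (PiM I (\<lambda>_. count_space (UNIV::'x::countable set))) (count_space UNIV)"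
  using assms
proof (induction L)
  case Nil
  then show ?case by simp
next
  case (Cons i L)
  have "(\<lambda>f. (f i, map f L)) \<in> measurable (PiM I (\<lambda>_. count_space (UNIV::'x set))) (count_space UNIV \<Otimes>\<^sub>M count_space UNIV)"
    using Cons by (intro measurable_Pair measurable_component_singleton) auto
  then have m: "(\<lambda>f. (f i, map f L)) \<in> measurable (PiM I (\<lambda>_. count_space (UNIV::'x set))) (count_space UNIV)"
    unfolding cs_pair .
  have "(\<lambda>f. (\<lambda>(a, l). a # l) (f i, map f L)) \<in> measurable (PiM I (\<lambda>_. count_space (UNIV::'x set))) (count_space UNIV)"
    by (rule measurable_compose[OF m]) simp
  then show ?case by simp
qed

lemma indep_list:
  fixes W :: "'i \<Rightarrow> 'a \<Rightarrow> 'x::countable"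
  assumes ind: "indep_vars (\<lambda>_. count_space UNIV) W I" and j: "j \<in> I" and L: "set L \<subseteq> I"
    and jL: "j \<notin> set L"
  shows "indep_var (count_space UNIV) (\<lambda>\<omega>. [W j \<omega>]) (count_space UNIV) (\<lambda>\<omega>. map (\<lambda>i. W i \<omega>) L)"
proof -
  have "indep_var (PiM {j} (\<lambda>_. count_space UNIV)) (\<lambda>\<omega>. restrict (\<lambda>i. W i \<omega>) {j})
     (PiM (set L) (\<lambda>_. count_space UNIV)) (\<lambda>\<omega>. restrict (\<lambda>i. W i \<omega>) (set L))"
    by (rule indep_var_restrict[OF ind]) (use j L jL in auto)
  then have "indep_var (count_space UNIV) ((\<lambda>f. map f [j]) \<circ> (\<lambda>\<omega>. restrict (\<lambda>i. W i \<omega>) {j}))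
     (count_space UNIV) ((\<lambda>f. map f L) \<circ> (\<lambda>\<omega>. restrict (\<lambda>i. W i \<omega>) (set L)))"
    by (rule indep_var_compose) (rule meas_map_PiM, simp)+
  moreover have "((\<lambda>f. map f [j]) \<circ> (\<lambda>\<omega>. restrict (\<lambda>i. W i \<omega>) {j})) = (\<lambda>\<omega>. [W j \<omega>])"
    by (simp add: fun_eq_iff)
  moreover have "((\<lambda>f. map f L) \<circ> (\<lambda>\<omega>. restrict (\<lambda>i. W i \<omega>) (set L))) = (\<lambda>\<omega>. map (\<lambda>i. W i \<omega>) L)"
    by (simp add: fun_eq_iff)
  ultimately show ?thesis by simp
qed

lemma fe_map:
  fixes W :: "'i \<Rightarrow> 'a \<Rightarrow> 'x::countable"
  assumes "\<And>i. i \<in> set L \<Longrightarrow> fe (W i)"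
  shows "fe (\<lambda>\<omega>. map (\<lambda>i. W i \<omega>) L)"
  using assms
proof (induction L)
  case Nil
  then show ?case using fe_const[of "[]::'x list"] by simp
next
  case (Cons i L)
  have "fe (\<lambda>\<omega>. (\<lambda>(a, l). a # l) (W i \<omega>, map (\<lambda>i. W i \<omega>) L))"
    by (rule fe_relabel[OF fe_pair]) (use Cons in \<open>auto simp: inj_def\<close>)
  then show ?case by simp
qed

lemma fe_meas: "fe X \<Longrightarrow> X \<in> measurable M (count_space UNIV)"
  by (simp add: fe_def)

lemma mono_H:
  fixes S :: "'a \<Rightarrow> 'x::countable" and Z :: "'a \<Rightarrow> 'z::countable"
  assumes fS: "fe S" and fZ: "fe Z"
  shows "HH Z \<le> HH (\<lambda>\<omega>. (S \<omega>, Z \<omega>))"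
proof -
  have "HH (\<lambda>\<omega>. (S \<omega>, S \<omega>, Z \<omega>)) + HH Z \<le> HH (\<lambda>\<omega>. (S \<omega>, Z \<omega>)) + HH (\<lambda>\<omega>. (S \<omega>, Z \<omega>))"
    by (rule submod[OF fS fS fZ])
  moreover have "HH (\<lambda>\<omega>. (\<lambda>(s, z). (s, s, z)) (S \<omega>, Z \<omega>)) = HH (\<lambda>\<omega>. (S \<omega>, Z \<omega>))"
    by (rule entropy_relabel[OF fe_meas[OF fe_pair[OF fS fZ]]]) (auto simp: inj_def)
  ultimately show ?thesis by simp
qed


lemma G:
  fixes W :: "'i \<Rightarrow> 'a \<Rightarrow> 'x::countable" and S :: "'a \<Rightarrow> 'c::countable"
  assumes ind: "indep_vars (\<lambda>_. count_space UNIV) W I"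
    and feW: "\<And>i. i \<in> I \<Longrightarrow> fe (W i)" and feS: "fe S"
  shows "distinct J \<Longrightarrow> set J \<subseteq> I \<Longrightarrow> set L \<subseteq> I \<Longrightarrow> set J \<inter> set L = {} \<Longrightarrow>
   (\<Sum>j\<in>set J. HH (W j) + HH (\<lambda>\<omega>. (S \<omega>, map (\<lambda>i. W i \<omega>) L))
       - HH (\<lambda>\<omega>. (W j \<omega>, S \<omega>, map (\<lambda>i. W i \<omega>) L)))
   \<le> HH (\<lambda>\<omega>. (S \<omega>, map (\<lambda>i. W i \<omega>) L)) - HH (\<lambda>\<omega>. map (\<lambda>i. W i \<omega>) L)"
proof (induction J arbitrary: L)
  case Nil
  have "fe (\<lambda>\<omega>. map (\<lambda>i. W i \<omega>) L)" using Nil feW by (intro fe_map) auto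
  then show ?case using mono_H[OF feS] by simp
next
  case (Cons j J)
  define Z where "Z = (\<lambda>\<omega>. map (\<lambda>i. W i \<omega>) L)"
  have jI: "j \<in> I" and JI: "set J \<subseteq> I" and LI: "set L \<subseteq> I" and jL: "j \<notin> set L"
    and jJ: "j \<notin> set J" and dJ: "distinct J" and JjL: "set J \<inter> set (j # L) = {}"
    using Cons.prems by auto
  have fZ: "fe Z" unfolding Z_def using LI feW by (intro fe_map) auto
  have fWj: "fe (W j)" using jI feW by simp
  have fSZ: "fe (\<lambda>\<omega>. (S \<omega>, Z \<omega>))" by (rule fe_pair[OF feS fZ])
  have IH: "(\<Sum>i\<in>set J. HH (W i) + HH (\<lambda>\<omega>. (S \<omega>, W j \<omega> # Z \<omega>))
       - HH (\<lambda>\<omega>. (W i \<omega>, S \<omega>, W j \<omega> # Z \<omega>)))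
   \<le> HH (\<lambda>\<omega>. (S \<omega>, W j \<omega> # Z \<omega>)) - HH (\<lambda>\<omega>. W j \<omega> # Z \<omega>)"
    using Cons.IH[OF dJ JI _ JjL] jI LI unfolding Z_def by simp
  have r1: "HH (\<lambda>\<omega>. (S \<omega>, W j \<omega> # Z \<omega>)) = HH (\<lambda>\<omega>. (W j \<omega>, S \<omega>, Z \<omega>))"
  proof -
    have "HH (\<lambda>\<omega>. (\<lambda>(a, s, z). (s, a # z)) (W j \<omega>, S \<omega>, Z \<omega>)) = HH (\<lambda>\<omega>. (W j \<omega>, S \<omega>, Z \<omega>))"
      by (rule entropy_relabel[OF fe_meas[OF fe_pair[OF fWj fSZ]]]) (auto simp: inj_def)
    then show ?thesis by simp
  qed
  have r2: "HH (\<lambda>\<omega>. (W i \<omega>, S \<omega>, W j \<omega> # Z \<omega>)) = HH (\<lambda>\<omega>. (W i \<omega>, W j \<omega>, S \<omega>, Z \<omega>))"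
    if "i \<in> I" for i
  proof -
    have fWi: "fe (W i)" using that feW by simp
    have "HH (\<lambda>\<omega>. (\<lambda>(c, a, s, z). (c, s, a # z)) (W i \<omega>, W j \<omega>, S \<omega>, Z \<omega>)) = HH (\<lambda>\<omega>. (W i \<omega>, W j \<omega>, S \<omega>, Z \<omega>))"
      by (rule entropy_relabel[OF fe_meas[OF fe_pair[OF fWi fe_pair[OF fWj fSZ]]]]) (auto simp: inj_def)
    then show ?thesis by simp
  qed
  have r3: "HH (\<lambda>\<omega>. W j \<omega> # Z \<omega>) = HH (W j) + HH Z"
  proof -
    have "HH (\<lambda>\<omega>. (\<lambda>(a, z). a # z) (W j \<omega>, Z \<omega>)) = HH (\<lambda>\<omega>. (W j \<omega>, Z \<omega>))"
      by (rule entropy_relabel[OF fe_meas[OF fe_pair[OF fWj fZ]]]) (auto simp: inj_def)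
    moreover have "HH (\<lambda>\<omega>. (\<lambda>(a, z). ([a], z)) (W j \<omega>, Z \<omega>)) = HH (\<lambda>\<omega>. (W j \<omega>, Z \<omega>))"
      by (rule entropy_relabel[OF fe_meas[OF fe_pair[OF fWj fZ]]]) (auto simp: inj_def)
    moreover have "HH (\<lambda>\<omega>. ([W j \<omega>], Z \<omega>)) = HH (\<lambda>\<omega>. [W j \<omega>]) + HH Z"
    proof (rule indep_entropy)
      show "fe (\<lambda>\<omega>. [W j \<omega>])" using fe_relabel[OF fWj, of "\<lambda>a. [a]"] by (simp add: inj_def)
      show "fe Z" by (rule fZ)
      show "indep_var (count_space UNIV) (\<lambda>\<omega>. [W j \<omega>]) (count_space UNIV) Z"
        unfolding Z_def by (rule indep_list[OF ind jI LI jL])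
    qed
    moreover have "HH (\<lambda>\<omega>. (\<lambda>a. [a]) (W j \<omega>)) = HH (W j)"
      by (rule entropy_relabel[OF fe_meas[OF fWj]]) (auto simp: inj_def)
    ultimately show ?thesis by simp
  qed
  have sm: "HH (\<lambda>\<omega>. (W i \<omega>, S \<omega>, Z \<omega>)) - HH (\<lambda>\<omega>. (W i \<omega>, W j \<omega>, S \<omega>, Z \<omega>))
      \<ge> HH (\<lambda>\<omega>. (S \<omega>, Z \<omega>)) - HH (\<lambda>\<omega>. (W j \<omega>, S \<omega>, Z \<omega>))"
    if "i \<in> I" for i
    using submod[OF _ fWj fSZ, of "W i"] that feW by simp
  have "(\<Sum>i\<in>set J. HH (W i) + HH (\<lambda>\<omega>. (S \<omega>, Z \<omega>)) - HH (\<lambda>\<omega>. (W i \<omega>, S \<omega>, Z \<omega>)))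
      \<le> (\<Sum>i\<in>set J. HH (W i) + HH (\<lambda>\<omega>. (S \<omega>, W j \<omega> # Z \<omega>))
       - HH (\<lambda>\<omega>. (W i \<omega>, S \<omega>, W j \<omega> # Z \<omega>)))"
  proof (rule sum_mono)
    fix i assume "i \<in> set J"
    then have iI: "i \<in> I" using JI by auto
    show "HH (W i) + HH (\<lambda>\<omega>. (S \<omega>, Z \<omega>)) - HH (\<lambda>\<omega>. (W i \<omega>, S \<omega>, Z \<omega>))
      \<le> HH (W i) + HH (\<lambda>\<omega>. (S \<omega>, W j \<omega> # Z \<omega>)) - HH (\<lambda>\<omega>. (W i \<omega>, S \<omega>, W j \<omega> # Z \<omega>))"
      using sm[OF iI] r1 r2[OF iI] by simp
  qed
  also note IH
  finally have *: "(\<Sum>i\<in>set J. HH (W i) + HH (\<lambda>\<omega>. (S \<omega>, Z \<omega>)) - HH (\<lambda>\<omega>. (W i \<omega>, S \<omega>, Z \<omega>)))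
      \<le> HH (\<lambda>\<omega>. (W j \<omega>, S \<omega>, Z \<omega>)) - HH (W j) - HH Z"
    using r1 r3 by simp
  have "(\<Sum>i\<in>set (j # J). HH (W i) + HH (\<lambda>\<omega>. (S \<omega>, Z \<omega>)) - HH (\<lambda>\<omega>. (W i \<omega>, S \<omega>, Z \<omega>)))
     = HH (W j) + HH (\<lambda>\<omega>. (S \<omega>, Z \<omega>)) - HH (\<lambda>\<omega>. (W j \<omega>, S \<omega>, Z \<omega>))
       + (\<Sum>i\<in>set J. HH (W i) + HH (\<lambda>\<omega>. (S \<omega>, Z \<omega>)) - HH (\<lambda>\<omega>. (W i \<omega>, S \<omega>, Z \<omega>)))"
    using jJ by simp
  also have "\<dots> \<le> HH (\<lambda>\<omega>. (S \<omega>, Z \<omega>)) - HH Z"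
    using * by simp
  finally show ?case unfolding Z_def .
qed


lemma main_ctx:
  fixes W :: "nat \<Rightarrow> 'a \<Rightarrow> 'x::countable" and S :: "'a \<Rightarrow> 'c::countable" and D :: nat
  assumes D2: "D \<ge> 2" and ind: "indep_vars (\<lambda>_. count_space UNIV) W {1..D}"
    and feW: "\<And>d. d \<in> {1..D} \<Longrightarrow> fe (W d)" and feS: "fe S"
  shows "(\<Sum>(d1, d2) \<in> {(d1, d2). d1 \<in> {1..D} \<and> d2 \<in> {1..D} \<and> d1 \<noteq> d2}.
            mutual_information b (count_space UNIV) (count_space UNIV) (\<lambda>x. (W d1 x, W d2 x)) S)
         \<le> (2 * real D - 1) * HH S"
proof -
  define I where "I = {1..D}"
  define K where "K a = HH (\<lambda>\<omega>. (W a \<omega>, S \<omega>))" for a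
  define Ia where "Ia a = HH (W a) + HH S - K a" for a
  define T where "T a v = HH (\<lambda>\<omega>. (W v \<omega>, S \<omega>, [W a \<omega>]))" for a v
  define mi where "mi a v = mutual_information b (count_space UNIV) (count_space UNIV) (\<lambda>x. (W a x, W v x)) S" for a v
  have finI: "finite I" by (simp add: I_def)
  have fW: "fe (W a)" if "a \<in> I" for a using feW that by (simp add: I_def)
  have ind': "indep_vars (\<lambda>_. count_space UNIV) W I" using ind by (simp add: I_def)
  have HS: "0 \<le> HH S" by (rule entropy_nonneg[OF fe_meas[OF feS]])
  have mi_eq2: "mi a v = HH (W a) + HH S - K a + (HH (W v) + K a - T a v)"
    if a: "a \<in> I" and v: "v \<in> I" and ab: "a \<noteq> v" for a v
  proof -
    have fa: "fe (W a)" and fb: "fe (W v)" using a v fW by auto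
    have fab: "fe (\<lambda>x. (W a x, W v x))" by (rule fe_pair[OF fa fb])
    have 1: "mi a v = HH (\<lambda>x. (W a x, W v x)) + HH S - HH (\<lambda>x. ((W a x, W v x), S x))"
      unfolding mi_def by (rule mi_eq[OF fab feS])
    have "HH (\<lambda>\<omega>. (\<lambda>(x, y). ([x], [y])) (W a \<omega>, W v \<omega>)) = HH (\<lambda>x. (W a x, W v x))"
      by (rule entropy_relabel[OF fe_meas[OF fab]]) (auto simp: inj_def)
    moreover have "HH (\<lambda>\<omega>. ([W a \<omega>], [W v \<omega>])) = HH (\<lambda>\<omega>. [W a \<omega>]) + HH (\<lambda>\<omega>. [W v \<omega>])"
    proof (rule indep_entropy)
      show "fe (\<lambda>\<omega>. [W a \<omega>])" using fe_relabel[OF fa, of "\<lambda>a. [a]"] by (simp add: inj_def)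
      show "fe (\<lambda>\<omega>. [W v \<omega>])" using fe_relabel[OF fb, of "\<lambda>a. [a]"] by (simp add: inj_def)
      show "indep_var (count_space UNIV) (\<lambda>\<omega>. [W a \<omega>]) (count_space UNIV) (\<lambda>\<omega>. [W v \<omega>])"
        using indep_list[OF ind' a, of "[v]"] v ab by simp
    qed
    moreover have "HH (\<lambda>\<omega>. (\<lambda>x. [x]) (W a \<omega>)) = HH (W a)"
      by (rule entropy_relabel[OF fe_meas[OF fa]]) (auto simp: inj_def)
    moreover have "HH (\<lambda>\<omega>. (\<lambda>x. [x]) (W v \<omega>)) = HH (W v)"
      by (rule entropy_relabel[OF fe_meas[OF fb]]) (auto simp: inj_def)
    ultimately have 2: "HH (\<lambda>x. (W a x, W v x)) = HH (W a) + HH (W v)" by simp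
    have "HH (\<lambda>\<omega>. (\<lambda>((x, y), s). (y, s, [x])) ((W a \<omega>, W v \<omega>), S \<omega>)) = HH (\<lambda>x. ((W a x, W v x), S x))"
      by (rule entropy_relabel[OF fe_meas[OF fe_pair[OF fab feS]]]) (auto simp: inj_def)
    then have 3: "HH (\<lambda>x. ((W a x, W v x), S x)) = T a v" by (simp add: T_def)
    show ?thesis using 1 2 3 by simp
  qed
  have Ga: "(\<Sum>v\<in>I - {a}. HH (W v) + K a - T a v) \<le> K a - HH (W a)" if a: "a \<in> I" for a
  proof -
    have fa: "fe (W a)" using a fW by auto
    have "(\<Sum>j\<in>set (sorted_list_of_set (I - {a})). HH (W j) + HH (\<lambda>\<omega>. (S \<omega>, map (\<lambda>i. W i \<omega>) [a]))
       - HH (\<lambda>\<omega>. (W j \<omega>, S \<omega>, map (\<lambda>i. W i \<omega>) [a])))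
      \<le> HH (\<lambda>\<omega>. (S \<omega>, map (\<lambda>i. W i \<omega>) [a])) - HH (\<lambda>\<omega>. map (\<lambda>i. W i \<omega>) [a])"
      by (rule G[OF ind' fW feS]) (use a finI in auto)
    moreover have "HH (\<lambda>\<omega>. (\<lambda>(w, s). (s, [w])) (W a \<omega>, S \<omega>)) = K a"
      unfolding K_def by (rule entropy_relabel[OF fe_meas[OF fe_pair[OF fa feS]]]) (auto simp: inj_def)
    moreover have "HH (\<lambda>\<omega>. (\<lambda>x. [x]) (W a \<omega>)) = HH (W a)"
      by (rule entropy_relabel[OF fe_meas[OF fa]]) (auto simp: inj_def)
    ultimately show ?thesis using finI by (simp add: T_def)
  qed
  have G0: "(\<Sum>a\<in>I. Ia a) \<le> HH S"
  proof -
    have "(\<Sum>j\<in>set (sorted_list_of_set I). HH (W j) + HH (\<lambda>\<omega>. (S \<omega>, map (\<lambda>i. W i \<omega>) [])) 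
       - HH (\<lambda>\<omega>. (W j \<omega>, S \<omega>, map (\<lambda>i. W i \<omega>) [])))
      \<le> HH (\<lambda>\<omega>. (S \<omega>, map (\<lambda>i. W i \<omega>) [])) - HH (\<lambda>\<omega>. map (\<lambda>i. W i \<omega>) ([]::nat list))"
      by (rule G[OF ind' fW feS]) (use finI in auto)
    moreover have "HH (\<lambda>\<omega>. (\<lambda>s. (s, []::'x list)) (S \<omega>)) = HH S"
      by (rule entropy_relabel[OF fe_meas[OF feS]]) (auto simp: inj_def)
    moreover have "HH (\<lambda>\<omega>. (\<lambda>(w, s). (w, s, []::'x list)) (W a \<omega>, S \<omega>)) = K a" if "a \<in> I" for a
      unfolding K_def using that
      by (intro entropy_relabel[OF fe_meas[OF fe_pair[OF fW feS]]]) (auto simp: inj_def)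
    moreover have "HH (\<lambda>\<omega>. []::'x list) = 0" by (rule entropy_const)
    ultimately show ?thesis using finI by (simp add: Ia_def)
  qed
  have cardI: "card (I - {a}) = D - 1" if "a \<in> I" for a using that by (simp add: I_def)
  have inner: "(\<Sum>v\<in>I - {a}. mi a v) \<le> (real D - 2) * Ia a + HH S" if a: "a \<in> I" for a
  proof -
    have "(\<Sum>v\<in>I - {a}. mi a v) = (\<Sum>v\<in>I - {a}. Ia a + (HH (W v) + K a - T a v))"
      using a mi_eq2 by (intro sum.cong) (auto simp: Ia_def)
    also have "\<dots> = real (D - 1) * Ia a + (\<Sum>v\<in>I - {a}. HH (W v) + K a - T a v)"
      using cardI[OF a] by (simp add: sum.distrib)
    also have "\<dots> \<le> real (D - 1) * Ia a + (K a - HH (W a))"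
      using Ga[OF a] by simp
    also have "\<dots> = (real D - 2) * Ia a + HH S"
      using D2 by (simp add: Ia_def of_nat_diff algebra_simps)
    finally show ?thesis .
  qed
  have pairs: "{(d1, d2). d1 \<in> {1..D} \<and> d2 \<in> {1..D} \<and> d1 \<noteq> d2} = Sigma I (\<lambda>a. I - {a})"
    by (auto simp: I_def)
  have "(\<Sum>(d1, d2) \<in> {(d1, d2). d1 \<in> {1..D} \<and> d2 \<in> {1..D} \<and> d1 \<noteq> d2}.
            mutual_information b (count_space UNIV) (count_space UNIV) (\<lambda>x. (W d1 x, W d2 x)) S)
      = (\<Sum>a\<in>I. \<Sum>v\<in>I - {a}. mi a v)"
    unfolding pairs mi_def using finI by (subst sum.Sigma) auto
  also have "\<dots> \<le> (\<Sum>a\<in>I. (real D - 2) * Ia a + HH S)"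
    using inner by (intro sum_mono) auto
  also have "\<dots> = (real D - 2) * (\<Sum>a\<in>I. Ia a) + real D * HH S"
    by (simp add: sum.distrib sum_distrib_left I_def)
  also have "\<dots> \<le> (real D - 2) * HH S + real D * HH S"
    using G0 D2 by (intro add_right_mono mult_left_mono) auto
  also have "\<dots> \<le> (2 * real D - 1) * HH S"
    using HS by (simp add: algebra_simps)
  finally show ?thesis .
qed

end

theorem mainTheorem5:
  fixes M :: "'a measure" and b :: real and D :: nat
    and W :: "nat \<Rightarrow> 'a \<Rightarrow> 'b::countable"
    and S :: "'a \<Rightarrow> 'c::countable"
  assumes "information_space M b"
    and "D \<ge> 2"
    and "prob_space.indep_vars M (\<lambda>_. count_space UNIV) W {1..D}"
    and "\<And>d. d \<in> {1..D} \<Longrightarrow>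
           \<exists>f. information_space.finite_entropy M b (count_space UNIV) (W d) f"
    and "\<exists>f. information_space.finite_entropy M b (count_space UNIV) S f"
  shows "(\<Sum>(d1, d2) \<in> {(d1, d2). d1 \<in> {1..D} \<and> d2 \<in> {1..D} \<and> d1 \<noteq> d2}.
            prob_space.mutual_information M b (count_space UNIV) (count_space UNIV)
              (\<lambda>x. (W d1 x, W d2 x)) S)
         \<le> (2 * real D - 1) * prob_space.entropy M b (count_space UNIV) S"
proof -
  interpret information_space M b by fact
  have feW: "fe (W d)" if "d \<in> {1..D}" for d
    using assms(4)[OF that] finite_entropy_fe by blast
  have feS: "fe S" using assms(5) finite_entropy_fe by blast
  show ?thesis by (rule main_ctx[OF assms(2) assms(3) feW feS])
qed

end
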